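(* Let $X$ be an uncertain variable on $\Omega$ with finite range, let $\epsilon>0$, and let $\mathfrak{M}$ be a map defined on $[\![X]\!]$ with finite image such that $Y:=\mathfrak{M}\circ X$ is $\epsilon$-identifiable, i.e., $|[\![X\mid Y(\omega)=y]\!]|\geq |[\![X]\!]|\,2^{-\epsilon}$ for all $y\in[\![Y]\!]$. Then $$\mathcal{L}_\star(X\rightarrow Y)\leq \log_2\big(|[\![X]\!]|(1-2^{-\epsilon}) + 1\big).$$
   Context: Let $\Omega$ be a set. An uncertain variable (uv) is a map $X:\Omega\to\mathbb{X}$ into some set; all uvs considered have finite ranges. The range of $X$ is $[\![X]\!]:=\{X(\omega):\omega\in\Omega\}$; the conditional range is $[\![X\mid Y(\omega)=y]\!]:=\{X(\omega):\omega\in\Omega,\ Y(\omega)=y\}$. The non-stochastic brute-force guessing leakage from a uv $U$ to a uv $Y$ is $$\mathcal{L}(U\rightarrow Y):=\log_2\left(\frac{|[\![U]\!]|}{\min_{y\in[\![Y]\!]}|[\![U\mid Y(\omega)=y]\!]|}\right).$$ The maximal non-stochastic brute-force leakage from $X$ to $Y$ is $$\mathcal{L}_\star(X\rightarrow Y):=\sup_{g}\ \mathcal{L}(g\circ X\rightarrow Y),$$ where the supremum ranges over all finite sets $\mathcal{U}$ and all functions $g:[\![X]\!]\to\mathcal{U}$. *)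

theory Defs
  imports Main Complex_Main
begin

text \<open>Uncertain variables are maps from the sample type 'w (playing the role of Omega).\<close>

definition uv_range :: "('w \<Rightarrow> 'a) \<Rightarrow> 'a set" where
  "uv_range X = X ` UNIV"

definition cond_range :: "('w \<Rightarrow> 'a) \<Rightarrow> ('w \<Rightarrow> 'b) \<Rightarrow> 'b \<Rightarrow> 'a set" where
  "cond_range X Y y = {X w | w. Y w = y}"

definition bf_leakage :: "('w \<Rightarrow> 'a) \<Rightarrow> ('w \<Rightarrow> 'b) \<Rightarrow> real" where
  "bf_leakage U Y =
     log 2 (real (card (uv_range U)) /
            real (Min ((\<lambda>y. card (cond_range U Y y)) ` uv_range Y)))"

text \<open>Maximal non-stochastic brute-force leakage: supremum over all functions g from
  the range of X into a codomain type 'u (the image g ` [[X]] is automatically finite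
  when [[X]] is finite; the type 'u is universally quantified wherever Lstar is used).\<close>
definition max_bf_leakage :: "'u itself \<Rightarrow> ('w \<Rightarrow> 'x) \<Rightarrow> ('w \<Rightarrow> 'y) \<Rightarrow> real" where
  "max_bf_leakage _ X Y = (SUP g \<in> (UNIV :: ('x \<Rightarrow> 'u) set). bf_leakage (g \<circ> X) Y)"

end

theory Submission
  imports Defs
begin

lemma card_img_diff:
  assumes "finite S" "A \<subseteq> S"
  shows "real (card (g ` S)) \<le> real (card (g ` A)) + real (card S) - real (card A)"
proof -
  have "g ` S \<subseteq> g ` A \<union> g ` (S - A)" by auto
  hence "card (g ` S) \<le> card (g ` A \<union> g ` (S - A))"
    using assms by (intro card_mono) (auto intro: finite_subset)
  also have "\<dots> \<le> card (g ` A) + card (g ` (S - A))" by (rule card_Un_le)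
  also have "card (g ` (S - A)) \<le> card (S - A)" by (rule card_image_le) (use assms in auto)
  also have "card (S - A) = card S - card A" using assms by (simp add: card_Diff_subset finite_subset)
  finally have "card (g ` S) \<le> card (g ` A) + (card S - card A)" by simp
  moreover have "card A \<le> card S" using assms by (simp add: card_mono)
  ultimately show ?thesis by (simp add: of_nat_diff)
qed

lemma ratio_bound:
  fixes m k c :: real
  assumes "c \<ge> 0" "k \<ge> 1" "k \<ge> m - c" "m \<ge> 0"
  shows "m / k \<le> c + 1"
proof (cases "m - c \<le> 1")
  case True
  have "m / k \<le> m" using assms by (simp add: divide_le_eq mult_le_cancel_left1)
  thus ?thesis using True by linarith
next
  case False
  have "c * (m - c - 1) \<ge> 0" using False assms by simp
  hence "m \<le> (c + 1) * (m - c)" by (simp add: algebra_simps)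
  also have "\<dots> \<le> (c+1) * k" using assms by (intro mult_left_mono) auto
  finally show ?thesis using assms by (simp add: divide_le_eq mult.commute)
qed

theorem mainTheorem7:
  fixes X :: "'w \<Rightarrow> 'x" and M :: "'x \<Rightarrow> 'y" and Y :: "'w \<Rightarrow> 'y" and \<epsilon> :: real
  assumes "finite (uv_range X)"
    and "\<epsilon> > 0"
    and "Y = M \<circ> X"
    and "\<forall>y \<in> uv_range Y. real (card (cond_range X Y y)) \<ge> real (card (uv_range X)) * 2 powr (-\<epsilon>)"
  shows "max_bf_leakage TYPE('u) X Y \<le> log 2 (real (card (uv_range X)) * (1 - 2 powr (-\<epsilon>)) + 1)"
  unfolding max_bf_leakage_def
proof (rule cSUP_least)
  show "(UNIV :: ('x \<Rightarrow> 'u) set) \<noteq> {}" by simp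
next
  fix g :: "'x \<Rightarrow> 'u"
  let ?n = "real (card (uv_range X))"
  define c where "c = ?n * (1 - 2 powr (-\<epsilon>))"
  have d: "2 powr (-\<epsilon>) \<le> 1" using powr_mono[of "-\<epsilon>" 0 "2::real"] assms(2) by simp
  have c0: "c \<ge> 0" unfolding c_def using d by simp
  have finY: "finite (uv_range Y)" using assms(1,3) unfolding uv_range_def
    by (metis finite_imageI image_comp)
  have neY: "uv_range Y \<noteq> {}" unfolding uv_range_def by simp
  define K where "K = (\<lambda>y. card (cond_range (g \<circ> X) Y y)) ` uv_range Y"
  have finK: "finite K" "K \<noteq> {}" using finY neY unfolding K_def by auto
  obtain y0 where y0: "y0 \<in> uv_range Y" "Min K = card (cond_range (g \<circ> X) Y y0)"
    using Min_in[OF finK] unfolding K_def by auto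
  have cr: "cond_range (g \<circ> X) Y y0 = g ` cond_range X Y y0"
    unfolding cond_range_def by auto
  have sub: "cond_range X Y y0 \<subseteq> uv_range X" unfolding cond_range_def uv_range_def by auto
  have ur: "uv_range (g \<circ> X) = g ` uv_range X" unfolding uv_range_def by (simp add: image_comp)
  have ne: "cond_range X Y y0 \<noteq> {}" using y0(1) unfolding cond_range_def uv_range_def by auto
  have fin0: "finite (cond_range X Y y0)" using sub assms(1) finite_subset by blast
  let ?k = "real (Min K)"
  let ?m = "real (card (uv_range (g \<circ> X)))"
  have k1: "?k \<ge> 1" using y0(2) cr ne fin0 by (simp add: Suc_leI card_gt_0_iff)
  have "?m \<le> ?k + ?n - real (card (cond_range X Y y0))"
    using card_img_diff[OF assms(1) sub, of g] ur y0(2) cr by simp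
  moreover have "real (card (cond_range X Y y0)) \<ge> ?n * 2 powr (-\<epsilon>)" using assms(4) y0(1) by blast
  ultimately have km: "?k \<ge> ?m - c" unfolding c_def by (simp add: algebra_simps)
  have "?m / ?k \<le> c + 1" by (rule ratio_bound[OF c0 k1 km]) simp
  moreover have "?m / ?k > 0"
    using k1 ur unfolding uv_range_def by (simp add: card_gt_0_iff assms(1)[unfolded uv_range_def])
  ultimately have "log 2 (?m / ?k) \<le> log 2 (c + 1)" by simp
  thus "bf_leakage (g \<circ> X) Y \<le> log 2 (?n * (1 - 2 powr (-\<epsilon>)) + 1)"
    unfolding bf_leakage_def K_def c_def by simp
qed

end
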